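(* Let $\beta>0$, $\alpha\in(0,1)$ and $\rho>0$. Consider the planar system \[ \dot p=\rho\,(1-e^{p})-q,\qquad \dot q=-\beta\alpha\rho\,(1-e^{p}),\qquad (p,q)\in\mathbb{R}^2 . \] Then this system is globally stable, with all solutions tending to $(0,0)$ as $t\to\infty$.
   Context: This system arises from the single-agent resource–consumption model $\dot x=(1-x)x-xy$, $\dot y=\beta\alpha(x-\rho)$ via the change of variables $p=\ln x-\ln\rho$, $q=y-(1-\rho)$. *)

theory Defs
  imports "HOL-Analysis.Analysis"
begin

definition rc_field :: "real \<Rightarrow> real \<Rightarrow> real \<Rightarrow> real \<times> real \<Rightarrow> real \<times> real" where
  "rc_field \<beta> \<alpha> \<rho> z =
     (\<rho> * (1 - exp (fst z)) - snd z, - \<beta> * \<alpha> * \<rho> * (1 - exp (fst z)))"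

definition rc_solution :: "real \<Rightarrow> real \<Rightarrow> real \<Rightarrow> (real \<Rightarrow> real \<times> real) \<Rightarrow> bool" where
  "rc_solution \<beta> \<alpha> \<rho> x \<longleftrightarrow>
     (\<forall>t\<ge>0. (x has_vector_derivative rc_field \<beta> \<alpha> \<rho> (x t)) (at t within {0..}))"

end

theory Submission
  imports Defs "HOL-Real_Asymp.Real_Asymp"
begin


lemma int_deriv0:
  fixes g :: "real \<Rightarrow> 'a::banach"
  assumes g: "continuous_on UNIV g" and t: "t \<ge> 0"
  shows "((\<lambda>u. integral {0..u} g) has_vector_derivative g t) (at t within {0..})"
proof -
  have "((\<lambda>u. integral {0..u} g) has_vector_derivative g t) (at t within {0..t+1})"
    by (rule integral_has_vector_derivative) (use g t in \<open>auto intro: continuous_on_subset\<close>)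
  moreover have "at t within {0..t+1} = at t within {0..}"
    by (rule at_within_nhd[of _ "{..<t+1}"]) auto
  ultimately show ?thesis by simp
qed

lemma int_cont0:
  fixes g :: "real \<Rightarrow> 'a::banach"
  assumes g: "continuous_on UNIV g"
  shows "continuous_on {0..} (\<lambda>u. integral {0..u} g)"
  unfolding continuous_on_eq_continuous_within
  by (auto intro: has_vector_derivative_continuous[OF int_deriv0[OF g]])

lemma exp_integral:
  fixes lam c s :: real
  assumes "lam > 0" "s \<ge> 0"
  shows "integral {0..s} (\<lambda>r. c * exp (lam * r)) = c * (exp (lam * s) - 1) / lam"
proof -
  have "((\<lambda>r. c * exp (lam * r)) has_integral (c * exp (lam * s) / lam - c * exp (lam * 0) / lam)) {0..s}"
  proof (rule fundamental_theorem_of_calculus)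
    fix x assume "x \<in> {0..s}"
    have "((\<lambda>r. c * exp (lam * r) / lam) has_real_derivative c * exp (lam * x)) (at x within {0..s})"
      using assms by (auto intro!: derivative_eq_intros)
    then show "((\<lambda>r. c * exp (lam * r) / lam) has_vector_derivative c * exp (lam * x)) (at x within {0..s})"
      by (simp add: has_real_derivative_iff_has_vector_derivative)
  qed (use assms in auto)
  then have "integral {0..s} (\<lambda>r. c * exp (lam * r)) = c * exp (lam * s) / lam - c * exp (lam * 0) / lam"
    by (rule integral_unique)
  then show ?thesis by (simp add: diff_divide_distrib right_diff_distrib)
qed

lemma global_exist:
  fixes F :: "real \<times> real \<Rightarrow> real \<times> real"
  assumes L: "L > 0" and lip: "\<And>a b. norm (F a - F b) \<le> L * norm (a - b)"
    and bnd: "\<And>a. norm (F a) \<le> B"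
  shows "\<exists>x. x 0 = z0 \<and> (\<forall>t\<ge>0. (x has_vector_derivative F (x t)) (at t within {0..}))"
proof -
  define lam where "lam = 2*L"
  have lam: "lam > 0" using L by (simp add: lam_def)
  have B0: "B \<ge> 0" using bnd[of 0] norm_ge_zero[of "F 0"] by linarith
  have Fc: "continuous_on UNIV F"
    by (rule lipschitz_on_continuous_on[of L]) (rule lipschitz_onI, use lip L in \<open>auto simp: dist_norm\<close>)
  define g where "g y s = F (exp (lam * s) *\<^sub>R apply_bcontfun y s)"
    for y :: "(real, real \<times> real) bcontfun" and s
  have gc: "continuous_on UNIV (g y)" for y
    unfolding g_def by (rule continuous_on_compose2[OF Fc]) (auto intro!: continuous_intros)
  have gi: "g y integrable_on {0..s}" for y s
    by (rule integrable_continuous_real) (rule continuous_on_subset[OF gc], auto)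
  define J where "J y u = integral {0..u} (g y)" for y u
  have Jc: "continuous_on {0..} (J y)" for y
    unfolding J_def using int_cont0[OF gc] .
  have Jb: "norm (J y s) \<le> B * s" if "s \<ge> 0" for y s
  proof -
    have "norm (J y s) \<le> integral {0..s} (\<lambda>_. B)"
      unfolding J_def by (rule integral_norm_bound_integral) (auto simp: gi g_def bnd)
    then show ?thesis using that by (simp add: mult.commute)
  qed
  define \<Phi>f where "\<Phi>f y t = exp (- lam * max 0 t) *\<^sub>R (z0 + J y (max 0 t))" for y t
  have mem: "\<Phi>f y \<in> bcontfun" for y
  proof (rule bcontfun_normI)
    have "continuous_on UNIV (\<lambda>t. J y (max 0 t))"
      by (rule continuous_on_compose2[OF Jc[of y]]) (auto intro!: continuous_intros)
    then show "continuous_on UNIV (\<Phi>f y)"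
      unfolding \<Phi>f_def by (auto intro!: continuous_intros)
    fix t :: real
    define s where "s = max 0 t"
    have s0: "s \<ge> 0" by (simp add: s_def)
    have e1: "exp (- lam * s) \<le> 1" using s0 lam by simp
    have "lam * s \<le> exp (lam * s)" using exp_ge_add_one_self[of "lam * s"] by linarith
    then have "s \<le> exp (lam * s) / lam" using lam by (simp add: field_simps)
    then have "exp (- lam * s) * s \<le> exp (- lam * s) * (exp (lam * s) / lam)"
      by (intro mult_left_mono) auto
    also have "\<dots> = 1 / lam" by (simp add: exp_minus field_simps)
    finally have es: "exp (- lam * s) * s \<le> 1 / lam" .
    have "norm (\<Phi>f y t) = exp (- lam * s) * norm (z0 + J y s)"
      unfolding \<Phi>f_def s_def by simp
    also have "\<dots> \<le> exp (- lam * s) * (norm z0 + B * s)"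
      using Jb[OF s0, of y] norm_triangle_ineq[of z0 "J y s"] by (intro mult_left_mono) auto
    also have "\<dots> = exp (- lam * s) * norm z0 + B * (exp (- lam * s) * s)"
      by (simp add: algebra_simps)
    also have "\<dots> \<le> norm z0 + B * (1 / lam)"
      using e1 es B0 by (intro add_mono mult_left_mono) (auto intro: mult_left_le_one_le)
    finally show "norm (\<Phi>f y t) \<le> norm z0 + B * (1 / lam)" .
  qed
  define \<Phi> where "\<Phi> y = Bcontfun (\<Phi>f y)" for y
  have \<Phi>_apply: "apply_bcontfun (\<Phi> y) t = \<Phi>f y t" for y t
    unfolding \<Phi>_def using mem by (simp add: Bcontfun_inverse)
  have contr: "dist (\<Phi> y1) (\<Phi> y2) \<le> (1/2) * dist y1 y2" for y1 y2
  proof (rule dist_bound)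
    fix t :: real
    define s where "s = max 0 t"
    define d where "d = dist y1 y2"
    have s0: "s \<ge> 0" by (simp add: s_def)
    have d0: "d \<ge> 0" by (simp add: d_def)
    have "J y1 s - J y2 s = integral {0..s} (\<lambda>r. g y1 r - g y2 r)"
      unfolding J_def by (rule integral_diff[symmetric]) (auto simp: gi)
    also have "norm \<dots> \<le> integral {0..s} (\<lambda>r. L * d * exp (lam * r))"
    proof (rule integral_norm_bound_integral)
      show "(\<lambda>r. g y1 r - g y2 r) integrable_on {0..s}" by (intro integrable_diff gi)
      show "(\<lambda>r. L * d * exp (lam * r)) integrable_on {0..s}"
        by (rule integrable_continuous_real) (auto intro!: continuous_intros)
      fix r
      have "norm (g y1 r - g y2 r) \<le> L * norm (exp (lam * r) *\<^sub>R apply_bcontfun y1 r - exp (lam * r) *\<^sub>R apply_bcontfun y2 r)"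
        unfolding g_def by (rule lip)
      also have "\<dots> = L * (exp (lam * r) * norm (apply_bcontfun y1 r - apply_bcontfun y2 r))"
        by (simp add: scaleR_diff_right[symmetric])
      also have "\<dots> \<le> L * (exp (lam * r) * d)"
        using dist_bounded[of y1 r y2] L unfolding d_def dist_norm
        by (intro mult_left_mono) auto
      finally show "norm (g y1 r - g y2 r) \<le> L * d * exp (lam * r)" by (simp add: algebra_simps)
    qed
    also have "\<dots> = L * d * (exp (lam * s) - 1) / lam"
      by (rule exp_integral[OF lam s0])
    finally have nJ: "norm (J y1 s - J y2 s) \<le> L * d * (exp (lam * s) - 1) / lam" .
    have "dist (apply_bcontfun (\<Phi> y1) t) (apply_bcontfun (\<Phi> y2) t)
        = exp (- lam * s) * norm (J y1 s - J y2 s)"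
      unfolding \<Phi>_apply \<Phi>f_def s_def[symmetric] dist_norm
      by (simp add: scaleR_diff_right[symmetric])
    also have "\<dots> \<le> exp (- lam * s) * (L * d * (exp (lam * s) - 1) / lam)"
      using nJ by (intro mult_left_mono) auto
    also have "\<dots> = L * d * (1 - exp (- lam * s)) / lam"
      by (simp add: exp_minus field_simps)
    also have "\<dots> \<le> L * d / lam"
    proof -
      have "L * d * (1 - exp (- lam * s)) \<le> L * d * 1"
        using L d0 by (intro mult_left_mono) auto
      then show ?thesis using lam by (intro divide_right_mono) auto
    qed
    also have "\<dots> = (1/2) * dist y1 y2" unfolding lam_def d_def using L by simp
    finally show "dist (apply_bcontfun (\<Phi> y1) t) (apply_bcontfun (\<Phi> y2) t) \<le> (1/2) * dist y1 y2" .
  qed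
  obtain y where yfix: "\<Phi> y = y"
    using banach_fix_type[of "1/2" \<Phi>] contr by auto
  define x where "x t = z0 + J y t" for t
  have "x 0 = z0" unfolding x_def J_def by simp
  moreover have "(x has_vector_derivative F (x t)) (at t within {0..})" if t: "t \<ge> 0" for t
  proof -
    have "(x has_vector_derivative g y t) (at t within {0..})"
      unfolding x_def J_def using has_vector_derivative_add[OF has_vector_derivative_const int_deriv0[OF gc t]] by simp
    moreover have "apply_bcontfun y t = exp (- lam * t) *\<^sub>R x t"
      using arg_cong[OF yfix, of "\<lambda>y. apply_bcontfun y t"] t
      by (simp add: \<Phi>_apply \<Phi>f_def x_def)
    then have "exp (lam * t) *\<^sub>R apply_bcontfun y t = x t"
      by (simp add: exp_minus)
    then have "g y t = F (x t)" unfolding g_def by simp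
    ultimately show ?thesis by simp
  qed
  ultimately show ?thesis by blast
qed



definition hf :: "real \<Rightarrow> real" where "hf p = exp p - 1 - p"

lemma hf_nonneg: "hf p \<ge> 0"
  unfolding hf_def using exp_ge_add_one_self[of p] by linarith

lemma hf_abs: "hf p \<ge> \<bar>p\<bar> - 1"
proof (cases "p \<ge> 0")
  case True
  have "1 + p + p\<^sup>2 / 2 \<le> exp p" using exp_lower_Taylor_quadratic[OF True] .
  moreover have "p\<^sup>2 / 2 + 1 - p \<ge> 0"
  proof -
    have "(p - 1)\<^sup>2 \<ge> 0" by simp
    then have "p\<^sup>2 - 2*p + 1 \<ge> 0" by (simp add: power2_eq_square algebra_simps)
    then show ?thesis by simp
  qed
  ultimately show ?thesis using True unfolding hf_def by simp
next
  case False
  then show ?thesis unfolding hf_def using exp_gt_zero[of p] by simp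
qed

lemma hf_lower_sq: "hf p \<ge> (exp (p/2) - 1)\<^sup>2"
proof -
  have e: "exp p = exp (p/2) * exp (p/2)" by (simp add: exp_add[symmetric])
  have "1 + p/2 \<le> exp (p/2)" by (rule exp_ge_add_one_self)
  moreover have "hf p - (exp (p/2) - 1)\<^sup>2 = 2 * exp (p/2) - 2 - p"
    unfolding hf_def e by (simp add: power2_eq_square algebra_simps)
  ultimately show ?thesis by linarith
qed

lemma hf_upper: "hf p \<le> (exp p - 1)\<^sup>2 * exp (- p)"
proof -
  have "1 - p \<le> exp (-p)" using exp_ge_add_one_self[of "-p"] by simp
  moreover have "(exp p - 1)\<^sup>2 * exp (- p) = exp p - 2 + exp (-p)"
    by (simp add: power2_eq_square algebra_simps exp_minus field_simps)
  ultimately show ?thesis unfolding hf_def by simp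
qed

lemma u_sq_le: assumes "p \<le> P" "P \<ge> 0" shows "(exp p - 1)\<^sup>2 \<le> (exp P + 1)\<^sup>2 * hf p"
proof -
  define w where "w = exp (p/2)"
  have ep: "exp p = w * w" unfolding w_def by (simp add: exp_add[symmetric])
  have w0: "w > 0" unfolding w_def by simp
  have "p/2 \<le> P" using assms by linarith
  then have "w \<le> exp P" unfolding w_def by simp
  then have "(w+1)\<^sup>2 \<le> (exp P + 1)\<^sup>2" using w0 by (intro power_mono) auto
  have "(exp p - 1)\<^sup>2 = (w - 1)\<^sup>2 * (w + 1)\<^sup>2" unfolding ep by (simp add: power2_eq_square algebra_simps)
  also have "\<dots> \<le> hf p * (exp P + 1)\<^sup>2"
    using hf_nonneg[of p] hf_lower_sq[of p] \<open>(w+1)\<^sup>2 \<le> (exp P + 1)\<^sup>2\<close> unfolding w_def[symmetric]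
    by (intro mult_mono) auto
  finally show ?thesis by (simp add: mult.commute)
qed



definition Vf :: "real \<Rightarrow> real \<times> real \<Rightarrow> real" where
  "Vf k z = k * hf (fst z) + (snd z)\<^sup>2 / 2"

lemma Vf_nonneg: "k \<ge> 0 \<Longrightarrow> Vf k z \<ge> 0"
  unfolding Vf_def using hf_nonneg[of "fst z"] by simp

lemma Vf_bound: assumes "k > 0" "Vf k z \<le> C"
  shows "\<bar>fst z\<bar> \<le> 1 + C / k" "\<bar>snd z\<bar> \<le> 1 + C"
proof -
  have h0: "hf (fst z) \<ge> 0" by (rule hf_nonneg)
  have q0: "(snd z)\<^sup>2 / 2 \<ge> 0" by simp
  have "k * hf (fst z) \<le> C" using assms q0 unfolding Vf_def by linarith
  then have "hf (fst z) \<le> C / k" using assms by (simp add: field_simps)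
  then show "\<bar>fst z\<bar> \<le> 1 + C / k" using hf_abs[of "fst z"] by linarith
  have "k * hf (fst z) \<ge> 0" using assms h0 by simp
  then have "(snd z)\<^sup>2 \<le> 2 * C" using assms unfolding Vf_def by linarith
  moreover have "(\<bar>snd z\<bar> - 1)\<^sup>2 \<ge> 0" by simp
  ultimately have "2 * \<bar>snd z\<bar> \<le> 1 + 2 * C"
    by (simp add: power2_eq_square algebra_simps abs_mult_self_eq)
  moreover have "C \<ge> 0" using assms Vf_nonneg[of k z] by simp
  ultimately show "\<bar>snd z\<bar> \<le> 1 + C" by linarith
qed

lemma Vf_small: assumes k: "k > 0" and e: "\<epsilon> > 0"
  shows "\<exists>\<eta>>0. \<forall>z. Vf k z < \<eta> \<longrightarrow> norm z < \<epsilon>"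
proof -
  define r where "r = \<epsilon> / 2"
  have r: "r > 0" using e by (simp add: r_def)
  define m where "m = min ((exp (r/2) - 1)\<^sup>2) ((exp (-r/2) - 1)\<^sup>2)"
  have "exp (r/2) \<noteq> 1" "exp (-r/2) \<noteq> 1" using r by auto
  then have m: "m > 0" unfolding m_def by auto
  define \<eta> where "\<eta> = min (k * m) (\<epsilon>\<^sup>2 / 8)"
  have "\<eta> > 0" using k m e by (simp add: \<eta>_def)
  moreover have "norm z < \<epsilon>" if V: "Vf k z < \<eta>" for z
  proof -
    obtain p q where z: "z = (p, q)" by (cases z)
    have h0: "hf p \<ge> 0" by (rule hf_nonneg)
    have q2: "q\<^sup>2 / 2 < \<epsilon>\<^sup>2 / 8" using V h0 k unfolding Vf_def z \<eta>_def
      by (smt (verit) fst_conv min.cobounded2 mult_nonneg_nonneg snd_conv)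
    have qa: "\<bar>q\<bar> < r"
    proof (rule ccontr)
      assume "\<not> \<bar>q\<bar> < r"
      then have "r\<^sup>2 \<le> \<bar>q\<bar>\<^sup>2" using r by (intro power_mono) auto
      then show False using q2 unfolding r_def by (simp add: power2_eq_square field_simps)
    qed
    have "k * hf p + q\<^sup>2 / 2 < k * m" using V unfolding Vf_def z \<eta>_def by simp
    then have "k * hf p < k * m" using zero_le_power2[of q] by linarith
    then have hm: "hf p < m" using k by simp
    have pa: "\<bar>p\<bar> < r"
    proof (rule ccontr)
      assume "\<not> \<bar>p\<bar> < r"
      then consider "p \<ge> r" | "p \<le> -r" by linarith
      then show False
      proof cases
        case 1
        then have "exp (r/2) \<le> exp (p/2)" by simp
        moreover have "1 \<le> exp (r/2)" using r by simp
        ultimately have "(exp (r/2) - 1)\<^sup>2 \<le> (exp (p/2) - 1)\<^sup>2" by (intro power_mono) auto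
        then have "m \<le> hf p" using hf_lower_sq[of p] unfolding m_def by linarith
        then show False using hm by simp
      next
        case 2
        then have "exp (p/2) \<le> exp (-r/2)" by simp
        moreover have "exp (-r/2) \<le> 1" using r by simp
        ultimately have "(1 - exp (-r/2))\<^sup>2 \<le> (1 - exp (p/2))\<^sup>2" by (intro power_mono) auto
        then have "(exp (-r/2) - 1)\<^sup>2 \<le> (exp (p/2) - 1)\<^sup>2" by (simp add: power2_commute)
        then have "m \<le> hf p" using hf_lower_sq[of p] unfolding m_def by linarith
        then show False using hm by simp
      qed
    qed
    have "norm z \<le> norm p + norm q" unfolding z by (rule norm_Pair_le)
    then show ?thesis using pa qa unfolding r_def by simp
  qed
  ultimately show ?thesis by blast
qed

lemma decr_lemma:
  fixes f :: "real \<Rightarrow> real"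
  assumes "a \<le> b" "continuous_on {a..b} f"
    and "\<And>z. a < z \<Longrightarrow> z < b \<Longrightarrow> \<exists>d. (f has_real_derivative d) (at z) \<and> d \<le> 0"
  shows "f b \<le> f a"
proof (cases "a = b")
  case False
  then have ab: "a < b" using assms by simp
  have "\<exists>l z. a < z \<and> z < b \<and> (f has_real_derivative l) (at z) \<and> f b - f a = (b - a) * l"
    by (rule MVT[OF ab assms(2)]) (use assms(3) real_differentiable_def in blast)
  then obtain l z where lz: "a < z" "z < b" "(f has_real_derivative l) (at z)" "f b - f a = (b - a) * l"
    by blast
  obtain d where d: "(f has_real_derivative d) (at z)" "d \<le> 0" using assms(3)[OF lz(1,2)] by blast
  have "l = d" using DERIV_unique[OF lz(3) d(1)] .
  then have "(b - a) * l \<le> 0" using d ab by (simp add: mult_nonneg_nonpos)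
  then show ?thesis using lz(4) by simp
qed simp

lemma vd_fst: "(x has_vector_derivative D) F \<Longrightarrow> ((\<lambda>t. fst (x t)) has_real_derivative fst D) F"
  unfolding has_vector_derivative_def has_field_derivative_def
  apply (drule has_derivative_fst)
  apply (erule has_derivative_eq_rhs)
  by (auto simp: fun_eq_iff)

lemma vd_snd: "(x has_vector_derivative D) F \<Longrightarrow> ((\<lambda>t. snd (x t)) has_real_derivative snd D) F"
  unfolding has_vector_derivative_def has_field_derivative_def
  apply (drule has_derivative_snd)
  apply (erule has_derivative_eq_rhs)
  by (auto simp: fun_eq_iff)



lemma V_deriv:
  assumes x: "(x has_vector_derivative rc_field \<beta> \<alpha> \<rho> (x t)) (at t within S)"
  shows "((\<lambda>t. Vf (\<beta>*\<alpha>*\<rho>) (x t)) has_real_derivative - (\<beta>*\<alpha>*\<rho>*\<rho>) * (exp (fst (x t)) - 1)\<^sup>2) (at t within S)"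
proof -
  define a where "a = fst (rc_field \<beta> \<alpha> \<rho> (x t))"
  define b where "b = snd (rc_field \<beta> \<alpha> \<rho> (x t))"
  have da: "((\<lambda>t. fst (x t)) has_real_derivative a) (at t within S)" unfolding a_def by (rule vd_fst[OF x])
  have db: "((\<lambda>t. snd (x t)) has_real_derivative b) (at t within S)" unfolding b_def by (rule vd_snd[OF x])
  have "((\<lambda>t. Vf (\<beta>*\<alpha>*\<rho>) (x t)) has_real_derivative
      (\<beta>*\<alpha>*\<rho>) * (exp (fst (x t)) * a - a) + 2 * snd (x t) * b / 2) (at t within S)"
    unfolding Vf_def hf_def
    by (auto intro!: derivative_eq_intros da db simp: algebra_simps)
  moreover have "(\<beta>*\<alpha>*\<rho>) * (exp (fst (x t)) * a - a) + 2 * snd (x t) * b / 2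
      = - (\<beta>*\<alpha>*\<rho>*\<rho>) * (exp (fst (x t)) - 1)\<^sup>2"
    unfolding a_def b_def rc_field_def by (simp add: power2_eq_square algebra_simps add_divide_distrib diff_divide_distrib)
  ultimately show ?thesis by simp
qed

lemma Vf_cont: "continuous_on UNIV (Vf k)"
  unfolding Vf_def hf_def by (intro continuous_intros) auto

lemma V_decr_gen:
  assumes "a \<le> b" "continuous_on {a..b} x"
    and "\<And>z. a < z \<Longrightarrow> z < b \<Longrightarrow> (x has_vector_derivative rc_field \<beta> \<alpha> \<rho> (x z)) (at z)"
    and "\<beta>*\<alpha>*\<rho>*\<rho> \<ge> 0"
  shows "Vf (\<beta>*\<alpha>*\<rho>) (x b) \<le> Vf (\<beta>*\<alpha>*\<rho>) (x a)"
proof (rule decr_lemma[OF assms(1)])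
  show "continuous_on {a..b} (\<lambda>t. Vf (\<beta>*\<alpha>*\<rho>) (x t))"
    by (rule continuous_on_compose2[OF Vf_cont assms(2)]) auto
  fix z assume "a < z" "z < b"
  from V_deriv[OF assms(3)[OF this]] assms(4)
  show "\<exists>d. ((\<lambda>t. Vf (\<beta>*\<alpha>*\<rho>) (x t)) has_real_derivative d) (at z) \<and> d \<le> 0"
    by (intro exI conjI) (auto simp: mult_nonneg_nonneg)
qed

lemma deriv_interior:
  assumes "(x has_vector_derivative D) (at t within {0..})" "t > 0"
  shows "(x has_vector_derivative D) (at t)"
proof -
  have "at t within {0..} = at t" by (rule at_within_open_subset[of _ "{0<..}"]) (use assms in auto)
  then show ?thesis using assms by simp
qed

lemma sol_cont:
  assumes "\<And>t. t \<ge> 0 \<Longrightarrow> (x has_vector_derivative f t) (at t within {0..})"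
  shows "continuous_on {0..} x"
  unfolding continuous_on_eq_continuous_within
  using assms has_vector_derivative_continuous by blast

lemma sol_V_mono:
  assumes "rc_solution \<beta> \<alpha> \<rho> x" "0 \<le> s" "s \<le> t" "\<beta>*\<alpha>*\<rho>*\<rho> \<ge> 0"
  shows "Vf (\<beta>*\<alpha>*\<rho>) (x t) \<le> Vf (\<beta>*\<alpha>*\<rho>) (x s)"
proof (rule V_decr_gen[OF assms(3)])
  have "continuous_on {0..} x" by (rule sol_cont) (use assms(1) in \<open>auto simp: rc_solution_def\<close>)
  then show "continuous_on {s..t} x" by (rule continuous_on_subset) (use assms in auto)
  fix z assume "s < z" "z < t"
  then show "(x has_vector_derivative rc_field \<beta> \<alpha> \<rho> (x z)) (at z)"
    using assms(1,2) by (intro deriv_interior) (auto simp: rc_solution_def)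
qed (use assms in auto)



definition clampf :: "real \<Rightarrow> real \<Rightarrow> real" where
  "clampf M u = max (- M) (min M u)"

definition FM :: "real \<Rightarrow> real \<Rightarrow> real \<Rightarrow> real \<Rightarrow> real \<times> real \<Rightarrow> real \<times> real" where
  "FM \<beta> \<alpha> \<rho> M z = (\<rho> * (1 - exp (clampf M (fst z))) - clampf M (snd z),
      - \<beta> * \<alpha> * \<rho> * (1 - exp (clampf M (fst z))))"

lemma clamp_id: "\<bar>u\<bar> \<le> M \<Longrightarrow> clampf M u = u"
  unfolding clampf_def by auto

lemma clamp_le: "M \<ge> 0 \<Longrightarrow> clampf M u \<le> M" unfolding clampf_def by auto
lemma clamp_abs: "M \<ge> 0 \<Longrightarrow> \<bar>clampf M u\<bar> \<le> M" unfolding clampf_def by auto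
lemma clamp_lip: "M \<ge> 0 \<Longrightarrow> \<bar>clampf M a - clampf M b\<bar> \<le> \<bar>a - b\<bar>"
  unfolding clampf_def by (auto simp: max_def min_def)

lemma abs_fst_le: fixes x :: "real \<times> real" shows "\<bar>fst x\<bar> \<le> norm x"
  unfolding norm_prod_def using real_sqrt_le_mono[of "(fst x)\<^sup>2" "(fst x)\<^sup>2 + (snd x)\<^sup>2"] by simp

lemma abs_snd_le: fixes x :: "real \<times> real" shows "\<bar>snd x\<bar> \<le> norm x"
  unfolding norm_prod_def using real_sqrt_le_mono[of "(snd x)\<^sup>2" "(fst x)\<^sup>2 + (snd x)\<^sup>2"] by simp

lemma FM_eq: "\<bar>fst z\<bar> \<le> M \<Longrightarrow> \<bar>snd z\<bar> \<le> M \<Longrightarrow> FM \<beta> \<alpha> \<rho> M z = rc_field \<beta> \<alpha> \<rho> z"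
  unfolding FM_def rc_field_def by (simp add: clamp_id)

lemma exp_lip: fixes u v M :: real assumes "u \<le> M" "v \<le> M" shows "\<bar>exp u - exp v\<bar> \<le> exp M * \<bar>u - v\<bar>"
proof -
  have main: "exp a - exp b \<le> exp M * (a - b)" if "b \<le> a" "a \<le> M" for a b
  proof -
    have "exp b = exp a * exp (b - a)" by (simp add: exp_diff)
    also have "\<dots> \<ge> exp a * (1 + (b - a))"
      using exp_ge_add_one_self[of "b - a"] by (intro mult_left_mono) auto
    finally have "exp a - exp b \<le> exp a * (a - b)" by (simp add: algebra_simps)
    also have "\<dots> \<le> exp M * (a - b)" using that by (intro mult_right_mono) auto
    finally show ?thesis .
  qed
  show ?thesis
  proof (cases "v \<le> u")
    case True then show ?thesis using main[OF True assms(1)] by simp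
  next
    case False then show ?thesis using main[of u v] assms by simp
  qed
qed

lemma exp_clamp_lip: assumes "M \<ge> 0" shows "\<bar>exp (clampf M a) - exp (clampf M b)\<bar> \<le> exp M * \<bar>a - b\<bar>"
proof -
  have "\<bar>exp (clampf M a) - exp (clampf M b)\<bar> \<le> exp M * \<bar>clampf M a - clampf M b\<bar>"
    by (rule exp_lip) (use clamp_le[OF assms] in auto)
  also have "\<dots> \<le> exp M * \<bar>a - b\<bar>" using clamp_lip[OF assms] by (intro mult_left_mono) auto
  finally show ?thesis .
qed

lemma FM_lip:
  assumes "M \<ge> 0" "\<rho> > 0" "\<beta>*\<alpha>*\<rho> \<ge> 0"
  shows "norm (FM \<beta> \<alpha> \<rho> M a - FM \<beta> \<alpha> \<rho> M b) \<le> (\<rho> * exp M + 1 + \<beta>*\<alpha>*\<rho> * exp M) * norm (a - b)"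
proof -
  define ea eb where "ea = exp (clampf M (fst a))" and "eb = exp (clampf M (fst b))"
  have f: "\<bar>fst a - fst b\<bar> \<le> norm (a - b)" using abs_fst_le[of "a - b"] by simp
  have "\<bar>ea - eb\<bar> \<le> exp M * \<bar>fst a - fst b\<bar>"
    unfolding ea_def eb_def by (rule exp_clamp_lip[OF assms(1)])
  also have "\<dots> \<le> exp M * norm (a - b)" using f by (intro mult_left_mono) auto
  finally have e: "\<bar>ea - eb\<bar> \<le> exp M * norm (a - b)" .
  have c: "\<bar>clampf M (snd a) - clampf M (snd b)\<bar> \<le> norm (a - b)"
    using clamp_lip[OF assms(1), of "snd a" "snd b"] abs_snd_le[of "a - b"] by simp
  have "FM \<beta> \<alpha> \<rho> M a - FM \<beta> \<alpha> \<rho> M b = (\<rho> * (eb - ea) - (clampf M (snd a) - clampf M (snd b)),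
      \<beta>*\<alpha>*\<rho> * (ea - eb))"
    unfolding FM_def ea_def eb_def by (simp add: algebra_simps)
  then have "norm (FM \<beta> \<alpha> \<rho> M a - FM \<beta> \<alpha> \<rho> M b) \<le>
      \<bar>\<rho> * (eb - ea) - (clampf M (snd a) - clampf M (snd b))\<bar> + \<bar>\<beta>*\<alpha>*\<rho> * (ea - eb)\<bar>"
    using norm_Pair_le by (metis real_norm_def)
  also have "\<dots> \<le> \<rho> * \<bar>ea - eb\<bar> + \<bar>clampf M (snd a) - clampf M (snd b)\<bar> + \<beta>*\<alpha>*\<rho> * \<bar>ea - eb\<bar>"
  proof -
    have "\<bar>\<beta>*\<alpha>*\<rho> * (ea - eb)\<bar> = \<beta>*\<alpha>*\<rho> * \<bar>ea - eb\<bar>"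
      using assms by (simp only: abs_mult[of "\<beta>*\<alpha>*\<rho>"] abs_of_nonneg)
    moreover have "\<bar>\<rho> * (eb - ea)\<bar> = \<rho> * \<bar>ea - eb\<bar>"
      using assms by (simp add: abs_mult abs_minus_commute)
    ultimately show ?thesis by linarith
  qed
  also have "\<dots> \<le> \<rho> * (exp M * norm (a - b)) + norm (a - b) + \<beta>*\<alpha>*\<rho> * (exp M * norm (a - b))"
    using e c assms by (intro add_mono mult_left_mono) auto
  also have "\<dots> = (\<rho> * exp M + 1 + \<beta>*\<alpha>*\<rho> * exp M) * norm (a - b)"
    by (simp add: algebra_simps)
  finally show ?thesis .
qed

lemma FM_bnd:
  assumes "M \<ge> 0" "\<rho> > 0" "\<beta>*\<alpha>*\<rho> \<ge> 0"
  shows "norm (FM \<beta> \<alpha> \<rho> M z) \<le> \<rho> * (1 + exp M) + M + \<beta>*\<alpha>*\<rho> * (1 + exp M)"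
proof -
  define e where "e = exp (clampf M (fst z))"
  have "e > 0" "e \<le> exp M" unfolding e_def using clamp_le[OF assms(1), of "fst z"] by auto
  then have e: "\<bar>1 - e\<bar> \<le> 1 + exp M" by linarith
  have "norm (FM \<beta> \<alpha> \<rho> M z) \<le> \<bar>\<rho> * (1 - e) - clampf M (snd z)\<bar> + \<bar>- \<beta>*\<alpha>*\<rho> * (1 - e)\<bar>"
    unfolding FM_def e_def[symmetric] using norm_Pair_le by (metis real_norm_def)
  also have "\<dots> \<le> \<rho> * \<bar>1 - e\<bar> + \<bar>clampf M (snd z)\<bar> + \<beta>*\<alpha>*\<rho> * \<bar>1 - e\<bar>"
  proof -
    have "- \<beta>*\<alpha>*\<rho> * (1 - e) = - ((\<beta>*\<alpha>*\<rho>) * (1 - e))" by simp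
    then have "\<bar>- \<beta>*\<alpha>*\<rho> * (1 - e)\<bar> = \<beta>*\<alpha>*\<rho> * \<bar>1 - e\<bar>"
      using assms by (simp only: abs_minus_cancel abs_mult[of "\<beta>*\<alpha>*\<rho>"] abs_of_nonneg)
    moreover have "\<bar>\<rho> * (1 - e)\<bar> = \<rho> * \<bar>1 - e\<bar>"
      using assms by (simp add: abs_mult)
    ultimately show ?thesis by linarith
  qed
  also have "\<dots> \<le> \<rho> * (1 + exp M) + M + \<beta>*\<alpha>*\<rho> * (1 + exp M)"
    using e clamp_abs[OF assms(1), of "snd z"] assms by (intro add_mono mult_left_mono) auto
  finally show ?thesis .
qed



lemma rc_exists:
  assumes b: "\<beta> > 0" and a: "\<alpha> > 0" and r: "\<rho> > 0"
  shows "\<exists>x. rc_solution \<beta> \<alpha> \<rho> x \<and> x 0 = z0"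
proof -
  define k where "k = \<beta>*\<alpha>*\<rho>"
  have k: "k > 0" using a b r by (simp add: k_def)
  define c where "c = Vf k z0"
  have c0: "c \<ge> 0" unfolding c_def using Vf_nonneg k by simp
  define M where "M = 3 + (c + 1) * (1 + 1/k)"
  have M0: "M \<ge> 0" using c0 k by (simp add: M_def)
  have box: "FM \<beta> \<alpha> \<rho> M z = rc_field \<beta> \<alpha> \<rho> z" if "Vf k z \<le> c + 1" for z
  proof (rule FM_eq)
    have "(c+1) / k \<le> (c + 1) * (1 + 1/k)" using c0 k by (simp add: field_simps)
    moreover have "c + 1 \<le> (c + 1) * (1 + 1/k)" using c0 k by (simp add: field_simps)
    ultimately show "\<bar>fst z\<bar> \<le> M" "\<bar>snd z\<bar> \<le> M"
      using Vf_bound[OF k that] unfolding M_def by linarith+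
  qed
  have kk: "\<beta>*\<alpha>*\<rho> \<ge> 0" using k by (simp add: k_def)
  obtain x where x0: "x 0 = z0"
    and xd: "\<forall>t\<ge>0. (x has_vector_derivative FM \<beta> \<alpha> \<rho> M (x t)) (at t within {0..})"
  proof -
    have "\<rho> * exp M > 0" "\<beta>*\<alpha>*\<rho> * exp M \<ge> 0" using r kk by auto
    then have Lp: "\<rho> * exp M + 1 + \<beta>*\<alpha>*\<rho> * exp M > 0" by linarith
    show ?thesis using global_exist[OF Lp FM_lip[OF M0 r kk] FM_bnd[OF M0 r kk], of z0] that by blast
  qed
  have xc: "continuous_on {0..} x" by (rule sol_cont) (use xd in auto)
  have inv: "Vf k (x t) \<le> c" if t: "t \<ge> 0" for t
  proof (rule ccontr)
    assume "\<not> Vf k (x t) \<le> c"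
    then have gt: "Vf k (x t) > c" by simp
    define \<theta> where "\<theta> = min (Vf k (x t)) (c + 1)"
    have \<theta>: "\<theta> > c" "\<theta> \<le> c + 1" using gt by (auto simp: \<theta>_def)
    define S where "S = {0..t} \<inter> (\<lambda>s. Vf k (x s)) -` {\<theta>..}"
    have tS: "t \<in> S" using t by (simp add: S_def \<theta>_def)
    have "continuous_on {0..t} (\<lambda>s. Vf k (x s))"
      by (rule continuous_on_compose2[OF Vf_cont continuous_on_subset[OF xc]]) auto
    then have cS: "closed S" unfolding S_def by (rule continuous_closed_preimage) auto
    have bS: "bdd_below S" unfolding S_def by (rule bdd_belowI[of _ 0]) auto
    define t0 where "t0 = Inf S"
    have t0S: "t0 \<in> S" unfolding t0_def using closed_contains_Inf[OF _ bS cS] tS by auto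
    then have t0: "0 \<le> t0" "t0 \<le> t" "Vf k (x t0) \<ge> \<theta>" by (auto simp: S_def)
    have below: "Vf k (x s) < \<theta>" if "0 \<le> s" "s < t0" for s
    proof (rule ccontr)
      assume "\<not> Vf k (x s) < \<theta>"
      then have "s \<in> S" using that t0 by (auto simp: S_def)
      then have "t0 \<le> s" unfolding t0_def using bS by (rule cInf_lower)
      then show False using that by simp
    qed
    have "t0 \<noteq> 0" using t0(3) \<theta>(1) x0 c_def by auto
    then have t0p: "t0 > 0" using t0 by simp
    have "Vf (\<beta>*\<alpha>*\<rho>) (x t0) \<le> Vf (\<beta>*\<alpha>*\<rho>) (x 0)"
    proof (rule V_decr_gen)
      show "continuous_on {0..t0} x" by (rule continuous_on_subset[OF xc]) auto
      fix z assume z: "0 < z" "z < t0"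
      have "(x has_vector_derivative FM \<beta> \<alpha> \<rho> M (x z)) (at z)"
        using xd z by (intro deriv_interior) auto
      moreover have "FM \<beta> \<alpha> \<rho> M (x z) = rc_field \<beta> \<alpha> \<rho> (x z)"
        using box below[of z] z \<theta> by auto
      ultimately show "(x has_vector_derivative rc_field \<beta> \<alpha> \<rho> (x z)) (at z)" by simp
    qed (use t0p kk r in auto)
    then show False using t0(3) \<theta>(1) x0 unfolding c_def k_def by simp
  qed
  have "rc_solution \<beta> \<alpha> \<rho> x"
    unfolding rc_solution_def
  proof (intro allI impI)
    fix t :: real assume "t \<ge> 0"
    then show "(x has_vector_derivative rc_field \<beta> \<alpha> \<rho> (x (t))) (at t within {0..})"
      using xd box[of "x t"] inv[of t] by auto
  qed
  then show ?thesis using x0 by blast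
qed



lemma W_ineq:
  fixes k \<rho> E ep e u q :: real
  assumes k: "k > 0" and r: "\<rho> > 0" and E: "E \<ge> 1" and ep1: "1/E \<le> ep" and ep2: "ep \<le> E"
    and e: "e > 0" and ec: "e * (2*k + \<rho>\<^sup>2 * E^3) \<le> k * \<rho>"
  shows "-(k*\<rho> - e*k) * u\<^sup>2 - e*\<rho>*ep*q*u - e*ep*q\<^sup>2 \<le> -(k*\<rho>/2) * u\<^sup>2 - (e/(2*E)) * q\<^sup>2"
proof -
  have E0: "E > 0" using E by simp
  have ep0: "ep > 0" using ep1 E0 by (smt (verit) divide_pos_pos)
  have "\<bar>\<rho>*ep*q*u\<bar> = \<rho>*ep*(\<bar>q\<bar>*\<bar>u\<bar>)" using r ep0 by (simp add: abs_mult)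
  also have "\<dots> \<le> \<rho>*E*(\<bar>q\<bar>*\<bar>u\<bar>)" using r ep2 by (intro mult_right_mono mult_left_mono) auto
  also have "\<dots> \<le> q\<^sup>2/(2*E) + \<rho>\<^sup>2*E^3*u\<^sup>2/2"
  proof -
    have "0 \<le> (\<bar>q\<bar> - \<rho>*E\<^sup>2*\<bar>u\<bar>)\<^sup>2" by simp
    then have "0 \<le> q\<^sup>2 - 2*(\<rho>*E\<^sup>2)*(\<bar>q\<bar>*\<bar>u\<bar>) + \<rho>\<^sup>2*E^4*u\<^sup>2"
      by (simp add: power2_eq_square algebra_simps power4_eq_xxxx)
    then have "0 \<le> (q\<^sup>2 - 2*(\<rho>*E\<^sup>2)*(\<bar>q\<bar>*\<bar>u\<bar>) + \<rho>\<^sup>2*E^4*u\<^sup>2) / (2*E)" using E0 by simp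
    also have "\<dots> = q\<^sup>2/(2*E) - \<rho>*E*(\<bar>q\<bar>*\<bar>u\<bar>) + \<rho>\<^sup>2*E^3*u\<^sup>2/2"
      using E0 by (simp add: field_simps power2_eq_square power3_eq_cube power4_eq_xxxx)
    finally show ?thesis by simp
  qed
  finally have s1: "- (q\<^sup>2/(2*E) + \<rho>\<^sup>2*E^3*u\<^sup>2/2) \<le> \<rho>*ep*q*u" by linarith
  have s1': "e * (- (q\<^sup>2/(2*E) + \<rho>\<^sup>2*E^3*u\<^sup>2/2)) \<le> e * (\<rho>*ep*q*u)"
    using s1 e by (intro mult_left_mono) auto
  have "1 * q\<^sup>2 \<le> (E * ep) * q\<^sup>2" using ep1 E0 by (intro mult_right_mono) (auto simp: divide_le_eq mult.commute)
  then have "q\<^sup>2/E \<le> ep * q\<^sup>2" using E0 by (simp add: divide_le_eq ac_simps)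
  then have s2: "e * (q\<^sup>2/E) \<le> e * (ep * q\<^sup>2)" using e by (intro mult_left_mono) auto
  have "k*\<rho>/2 \<le> k*\<rho> - e*k - e*\<rho>\<^sup>2*E^3/2" using ec by (simp add: algebra_simps)
  then have s3: "(k*\<rho>/2) * u\<^sup>2 \<le> (k*\<rho> - e*k - e*\<rho>\<^sup>2*E^3/2) * u\<^sup>2" by (intro mult_right_mono) auto
  have "-(k*\<rho> - e*k) * u\<^sup>2 - e*\<rho>*ep*q*u - e*ep*q\<^sup>2
      = -((k*\<rho> - e*k - e*\<rho>\<^sup>2*E^3/2) * u\<^sup>2) - e * (\<rho>*ep*q*u) - e * (ep * q\<^sup>2) - e*\<rho>\<^sup>2*E^3/2 * u\<^sup>2"
    by (simp add: algebra_simps)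
  also have "\<dots> \<le> -((k*\<rho>/2) * u\<^sup>2) + e * (q\<^sup>2/(2*E) + \<rho>\<^sup>2*E^3*u\<^sup>2/2) - e * (q\<^sup>2/E) - e*\<rho>\<^sup>2*E^3/2 * u\<^sup>2"
    using s1' s2 s3 by linarith
  also have "\<dots> = -(k*\<rho>/2) * u\<^sup>2 - (e/(2*E)) * q\<^sup>2"
    using E0 by (simp add: field_simps)
  finally show ?thesis .
qed



lemma W_deriv:
  assumes x: "(x has_vector_derivative rc_field \<beta> \<alpha> \<rho> (x t)) (at t within S)"
  shows "((\<lambda>t. Vf (\<beta>*\<alpha>*\<rho>) (x t) + e * snd (x t) * (exp (fst (x t)) - 1)) has_real_derivative
     -((\<beta>*\<alpha>*\<rho>)*\<rho> - e*(\<beta>*\<alpha>*\<rho>)) * (exp (fst (x t)) - 1)\<^sup>2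
     - e*\<rho>*exp (fst (x t))* snd (x t)*(exp (fst (x t)) - 1) - e*exp (fst (x t))*(snd (x t))\<^sup>2) (at t within S)"
proof -
  define a where "a = fst (rc_field \<beta> \<alpha> \<rho> (x t))"
  define b where "b = snd (rc_field \<beta> \<alpha> \<rho> (x t))"
  have da: "((\<lambda>t. fst (x t)) has_real_derivative a) (at t within S)" unfolding a_def by (rule vd_fst[OF x])
  have db: "((\<lambda>t. snd (x t)) has_real_derivative b) (at t within S)" unfolding b_def by (rule vd_snd[OF x])
  have dc: "((\<lambda>t. e * snd (x t) * (exp (fst (x t)) - 1)) has_real_derivative
      e * b * (exp (fst (x t)) - 1) + e * snd (x t) * (exp (fst (x t)) * a)) (at t within S)"
    by (auto intro!: derivative_eq_intros da db simp: algebra_simps)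
  have "((\<lambda>t. Vf (\<beta>*\<alpha>*\<rho>) (x t) + e * snd (x t) * (exp (fst (x t)) - 1)) has_real_derivative
     - (\<beta>*\<alpha>*\<rho>*\<rho>) * (exp (fst (x t)) - 1)\<^sup>2 +
     (e * b * (exp (fst (x t)) - 1) + e * snd (x t) * (exp (fst (x t)) * a))) (at t within S)"
    by (rule DERIV_add[OF V_deriv[OF x] dc])
  moreover have "- (\<beta>*\<alpha>*\<rho>*\<rho>) * (exp (fst (x t)) - 1)\<^sup>2 +
     (e * b * (exp (fst (x t)) - 1) + e * snd (x t) * (exp (fst (x t)) * a)) =
     -((\<beta>*\<alpha>*\<rho>)*\<rho> - e*(\<beta>*\<alpha>*\<rho>)) * (exp (fst (x t)) - 1)\<^sup>2
     - e*\<rho>*exp (fst (x t))* snd (x t)*(exp (fst (x t)) - 1) - e*exp (fst (x t))*(snd (x t))\<^sup>2"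
    unfolding a_def b_def rc_field_def by (simp add: power2_eq_square algebra_simps)
  ultimately show ?thesis by simp
qed

lemma pt_bounds:
  fixes k P p q e :: real
  assumes k: "k > 0" and P: "P \<ge> 0" "\<bar>p\<bar> \<le> P"
    and e: "e > 0" "e * (2 + (exp P + 1)\<^sup>2 / k) \<le> 1"
  shows "\<bar>e * q * (exp p - 1)\<bar> \<le> (k * hf p + q\<^sup>2/2) / 2"
    and "k * hf p + q\<^sup>2/2 \<le> (k * exp P + 1) * ((exp p - 1)\<^sup>2 + q\<^sup>2)"
proof -
  define u where "u = exp p - 1"
  define A1 where "A1 = (exp P + 1)\<^sup>2"
  define V where "V = k * hf p + q\<^sup>2/2"
  have h0: "hf p \<ge> 0" by (rule hf_nonneg)
  have V0: "V \<ge> 0" unfolding V_def using h0 k by simp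
  have A1: "A1 \<ge> 0" unfolding A1_def by simp
  have u2: "u\<^sup>2 \<le> A1 * hf p" unfolding u_def A1_def by (rule u_sq_le) (use P in auto)
  have "A1 * hf p = (A1 / k) * (k * hf p)" using k by simp
  also have "\<dots> \<le> (A1 / k) * V"
    unfolding V_def using A1 k by (intro mult_left_mono) auto
  finally have u2': "u\<^sup>2 \<le> (A1 / k) * V" using u2 by linarith
  have qu: "\<bar>q * u\<bar> \<le> (q\<^sup>2 + u\<^sup>2) / 2"
  proof -
    have "0 \<le> (\<bar>q\<bar> - \<bar>u\<bar>)\<^sup>2" by simp
    then show ?thesis by (simp add: power2_eq_square algebra_simps abs_mult)
  qed
  have q2: "q\<^sup>2 \<le> 2 * V" unfolding V_def using h0 k by simp
  have "q\<^sup>2 + u\<^sup>2 \<le> V * (2 + A1 / k)" using q2 u2' by (simp add: algebra_simps)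
  then have "(q\<^sup>2 + u\<^sup>2) / 2 \<le> V * (2 + A1/k) / 2" by (rule divide_right_mono) simp
  then have "\<bar>q * u\<bar> \<le> V * (2 + A1/k) / 2" using qu by (rule order_trans[rotated])
  then have "\<bar>e * q * u\<bar> \<le> e * (V * (2 + A1/k) / 2)"
    using e by (simp add: abs_mult mult.assoc mult_left_mono)
  also have "\<dots> = V * (e * (2 + A1/k)) / 2" by simp
  also have "\<dots> \<le> V * 1 / 2" using e V0 unfolding A1_def by (intro divide_right_mono mult_left_mono) auto
  finally show "\<bar>e * q * (exp p - 1)\<bar> \<le> (k * hf p + q\<^sup>2/2) / 2" unfolding u_def V_def by simp
  have "exp (-p) \<le> exp P" using P by simp
  then have "hf p \<le> u\<^sup>2 * exp P" using hf_upper[of p] unfolding u_def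
    by (smt (verit) mult_left_mono zero_le_power2)
  then have "k * hf p \<le> k * exp P * u\<^sup>2" using k by (simp add: mult_left_mono ac_simps)
  moreover have "k * exp P * u\<^sup>2 + q\<^sup>2/2 \<le> (k * exp P + 1) * (u\<^sup>2 + q\<^sup>2)"
  proof -
    have "0 \<le> k * exp P * q\<^sup>2" using k by simp
    then show ?thesis by (simp add: algebra_simps)
  qed
  ultimately show "k * hf p + q\<^sup>2/2 \<le> (k * exp P + 1) * ((exp p - 1)\<^sup>2 + q\<^sup>2)"
    unfolding u_def by linarith
qed



lemma exp_decay: "(\<delta>::real) > 0 \<Longrightarrow> ((\<lambda>t. C * exp(-\<delta>*t)) \<longlongrightarrow> 0) at_top"
  by real_asymp

lemma rc_conv:
  assumes b: "\<beta> > 0" and a: "\<alpha> > 0" and r: "\<rho> > 0" and sol: "rc_solution \<beta> \<alpha> \<rho> x"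
  shows "(x \<longlongrightarrow> (0,0)) at_top"
proof -
  define k where "k = \<beta>*\<alpha>*\<rho>"
  have k: "k > 0" using a b r by (simp add: k_def)
  have kk: "\<beta>*\<alpha>*\<rho>*\<rho> \<ge> 0" using k r unfolding k_def by simp
  define c where "c = Vf k (x 0)"
  have c0: "c \<ge> 0" unfolding c_def using Vf_nonneg k by simp
  define P where "P = 1 + c/k"
  have P0: "P \<ge> 0" unfolding P_def using c0 k by simp
  define E where "E = exp P"
  have E1: "E \<ge> 1" unfolding E_def using P0 by simp
  define e where "e = min (1/(2 + (E+1)\<^sup>2/k)) (k*\<rho>/(2*k + \<rho>\<^sup>2*E^3))"
  have d1: "2 + (E+1)\<^sup>2/k > 0" using k by (simp add: add_pos_nonneg)
  have d2: "2*k + \<rho>\<^sup>2*E^3 > 0" using k E1 by (simp add: add_pos_nonneg)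
  have e0: "e > 0" unfolding e_def using d1 d2 k r by simp
  have e1: "e * (2 + (exp P + 1)\<^sup>2/k) \<le> 1"
  proof -
    have "e \<le> 1/(2 + (E+1)\<^sup>2/k)" unfolding e_def by simp
    then show ?thesis using d1 unfolding E_def by (simp add: le_divide_eq)
  qed
  have e2: "e * (2*k + \<rho>\<^sup>2*E^3) \<le> k*\<rho>"
  proof -
    have "e \<le> k*\<rho>/(2*k + \<rho>\<^sup>2*E^3)" unfolding e_def by simp
    then show ?thesis using d2 by (simp add: le_divide_eq)
  qed
  define \<gamma> where "\<gamma> = min (k*\<rho>/2) (e/(2*E))"
  have \<gamma>: "\<gamma> > 0" unfolding \<gamma>_def using k r e0 E1 by simp
  define A2 where "A2 = k*E + 1"
  have A2: "A2 > 0" unfolding A2_def using k E1 by (simp add: add_pos_nonneg)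
  define \<delta> where "\<delta> = 2*\<gamma>/(3*A2)"
  have \<delta>: "\<delta> > 0" unfolding \<delta>_def using \<gamma> A2 by simp
  define W where "W z = Vf k z + e * snd z * (exp (fst z) - 1)" for z
  have Wc: "continuous_on UNIV W" unfolding W_def Vf_def hf_def by (intro continuous_intros) auto
  have xc: "continuous_on {0..} x" by (rule sol_cont) (use sol in \<open>auto simp: rc_solution_def\<close>)
  have Vle: "Vf k (x t) \<le> c" if "t \<ge> 0" for t
    unfolding c_def k_def by (rule sol_V_mono[OF sol]) (use that kk in auto)
  have pb: "\<bar>fst (x t)\<bar> \<le> P" if "t \<ge> 0" for t
    unfolding P_def by (rule Vf_bound(1)[OF k Vle[OF that]])
  have WV: "\<bar>W (x t) - Vf k (x t)\<bar> \<le> Vf k (x t) / 2" if "t \<ge> 0" for t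
    using pt_bounds(1)[OF k P0 pb[OF that] e0 e1, of "snd (x t)"] unfolding W_def Vf_def by simp
  have VA: "Vf k (x t) \<le> A2 * ((exp (fst (x t)) - 1)\<^sup>2 + (snd (x t))\<^sup>2)" if "t \<ge> 0" for t
    using pt_bounds(2)[OF k P0 pb[OF that] e0 e1, of "snd (x t)"] unfolding A2_def E_def Vf_def by simp
  have key: "exp (\<delta> * t) * W (x t) \<le> W (x 0)" if t: "t \<ge> 0" for t
  proof -
    have "(\<lambda>s. exp (\<delta> * s) * W (x s)) t \<le> (\<lambda>s. exp (\<delta> * s) * W (x s)) 0"
    proof (rule decr_lemma[OF t])
      show "continuous_on {0..t} (\<lambda>s. exp (\<delta> * s) * W (x s))"
        by (intro continuous_intros continuous_on_compose2[OF Wc continuous_on_subset[OF xc]]) auto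
      fix z assume z: "0 < z" "z < t"
      have xd: "(x has_vector_derivative rc_field \<beta> \<alpha> \<rho> (x z)) (at z)"
        using sol z by (intro deriv_interior) (auto simp: rc_solution_def)
      define p where "p = fst (x z)"
      define q where "q = snd (x z)"
      define u where "u = exp p - 1"
      define D where "D = -(k*\<rho> - e*k) * u\<^sup>2 - e*\<rho>*exp p*q*u - e*exp p*q\<^sup>2"
      have dW: "((\<lambda>s. W (x s)) has_real_derivative D) (at z)"
        using W_deriv[OF xd, of e] unfolding W_def D_def k_def p_def q_def u_def by simp
      have pz: "\<bar>p\<bar> \<le> P" unfolding p_def using pb z by simp
      have "exp (-P) \<le> exp p" using pz by simp
      then have ep1: "1/E \<le> exp p" unfolding E_def by (simp add: exp_minus inverse_eq_divide)
      have ep2: "exp p \<le> E" unfolding E_def using pz by simp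
      have "D \<le> -(k*\<rho>/2) * u\<^sup>2 - (e/(2*E)) * q\<^sup>2"
        unfolding D_def by (rule W_ineq[OF k r E1 ep1 ep2 e0 e2])
      also have "\<dots> \<le> -\<gamma> * (u\<^sup>2 + q\<^sup>2)"
      proof -
        have "\<gamma> * u\<^sup>2 \<le> (k*\<rho>/2) * u\<^sup>2" unfolding \<gamma>_def by (intro mult_right_mono) auto
        moreover have "\<gamma> * q\<^sup>2 \<le> (e/(2*E)) * q\<^sup>2" unfolding \<gamma>_def by (intro mult_right_mono) auto
        ultimately show ?thesis by (simp add: algebra_simps)
      qed
      also have "\<dots> \<le> -\<gamma> * (Vf k (x z) / A2)"
      proof -
        have "Vf k (x z) / A2 \<le> u\<^sup>2 + q\<^sup>2" using VA[of z] z A2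
          unfolding u_def p_def q_def by (simp add: divide_le_eq mult.commute)
        then have "\<gamma> * (Vf k (x z) / A2) \<le> \<gamma> * (u\<^sup>2 + q\<^sup>2)" using \<gamma> by (intro mult_left_mono) auto
        then show ?thesis by simp
      qed
      also have "\<dots> \<le> -\<delta> * W (x z)"
      proof -
        have "W (x z) \<le> 3/2 * Vf k (x z)" using WV[of z] z by linarith
        then have "\<delta> * W (x z) \<le> \<delta> * (3/2 * Vf k (x z))" using \<delta> by (intro mult_left_mono) auto
        also have "\<dots> = \<gamma> * (Vf k (x z) / A2)" unfolding \<delta>_def using A2 by (simp add: field_simps)
        finally show ?thesis by simp
      qed
      finally have DW: "D + \<delta> * W (x z) \<le> 0" by simp
      have "((\<lambda>s. exp (\<delta> * s) * W (x s)) has_real_derivative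
          exp (\<delta> * z) * \<delta> * W (x z) + exp (\<delta> * z) * D) (at z)"
        by (auto intro!: derivative_eq_intros dW)
      moreover have "exp (\<delta> * z) * \<delta> * W (x z) + exp (\<delta> * z) * D = exp (\<delta> * z) * (D + \<delta> * W (x z))"
        by (simp add: algebra_simps)
      moreover have "exp (\<delta> * z) * (D + \<delta> * W (x z)) \<le> 0"
        using DW by (simp add: mult_nonneg_nonpos)
      ultimately show "\<exists>d. ((\<lambda>s. exp (\<delta> * s) * W (x s)) has_real_derivative d) (at z) \<and> d \<le> 0"
        by auto
    qed
    then show ?thesis by simp
  qed
  define W0 where "W0 = W (x 0)"
  have Vdec: "Vf k (x t) \<le> 2 * W0 * exp (-\<delta> * t)" if t: "t \<ge> 0" for t
  proof -
    have "Vf k (x t) \<le> 2 * W (x t)" using WV[OF t] by linarith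
    also have "W (x t) = exp (-\<delta> * t) * (exp (\<delta> * t) * W (x t))"
      by (simp add: exp_minus field_simps)
    also have "\<dots> \<le> exp (-\<delta> * t) * W0" unfolding W0_def using key[OF t] by (intro mult_left_mono) auto
    finally show ?thesis by (simp add: mult.commute)
  qed
  show ?thesis
  proof (rule tendstoI)
    fix \<epsilon> :: real assume \<epsilon>: "\<epsilon> > 0"
    obtain \<eta> where \<eta>: "\<eta> > 0" "\<And>z. Vf k z < \<eta> \<Longrightarrow> norm z < \<epsilon>" using Vf_small[OF k \<epsilon>] by blast
    have "\<forall>\<^sub>F t in at_top. 2 * W0 * exp (-\<delta> * t) < \<eta>"
      using order_tendstoD(2)[OF exp_decay[OF \<delta>, of "2 * W0"] \<eta>(1)] .
    moreover have "\<forall>\<^sub>F t in at_top. (t::real) \<ge> 0" by (rule eventually_ge_at_top)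
    ultimately show "\<forall>\<^sub>F t in at_top. dist (x t) (0, 0) < \<epsilon>"
    proof eventually_elim
      case (elim t)
      then have "Vf k (x t) < \<eta>" using Vdec[of t] by linarith
      then show ?case using \<eta>(2) by (simp add: dist_norm zero_prod_def[symmetric])
    qed
  qed
qed


lemma rc_stable:
  assumes b: "\<beta> > 0" and a: "\<alpha> > 0" and r: "\<rho> > 0" and e: "\<epsilon> > 0"
  shows "\<exists>\<delta>>0. \<forall>x. rc_solution \<beta> \<alpha> \<rho> x \<and> norm (x 0) < \<delta> \<longrightarrow> (\<forall>t\<ge>0. norm (x t) < \<epsilon>)"
proof -
  define k where "k = \<beta>*\<alpha>*\<rho>"
  have k: "k > 0" using a b r by (simp add: k_def)
  have kk: "\<beta>*\<alpha>*\<rho>*\<rho> \<ge> 0" using k r unfolding k_def by simp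
  obtain \<eta> where \<eta>: "\<eta> > 0" "\<And>z. Vf k z < \<eta> \<Longrightarrow> norm z < \<epsilon>" using Vf_small[OF k e] by blast
  have "isCont (Vf k) 0" by (metis continuous_on_eq_continuous_at open_UNIV UNIV_I Vf_cont)
  then obtain \<delta> where \<delta>: "\<delta> > 0" "\<And>z. dist z 0 < \<delta> \<Longrightarrow> dist (Vf k z) (Vf k 0) < \<eta>"
    unfolding continuous_at_eps_delta using \<eta>(1) by blast
  have V0: "Vf k 0 = 0" by (simp add: Vf_def hf_def)
  have "\<forall>x. rc_solution \<beta> \<alpha> \<rho> x \<and> norm (x 0) < \<delta> \<longrightarrow> (\<forall>t\<ge>0. norm (x t) < \<epsilon>)"
  proof (intro allI impI)
    fix x t assume H: "rc_solution \<beta> \<alpha> \<rho> x \<and> norm (x 0) < \<delta>" and t: "(t::real) \<ge> 0"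
    have "Vf k (x 0) < \<eta>" using \<delta>(2)[of "x 0"] H V0 by (simp add: dist_norm)
    moreover have "Vf k (x t) \<le> Vf k (x 0)"
      unfolding k_def by (rule sol_V_mono) (use H t kk in auto)
    ultimately have "Vf k (x t) < \<eta>" by linarith
    then show "norm (x t) < \<epsilon>" by (rule \<eta>(2))
  qed
  then show ?thesis using \<delta>(1) by blast
qed

theorem theorem6p1:
  fixes \<beta> \<alpha> \<rho> :: real
  assumes "\<beta> > 0" and "0 < \<alpha>" and "\<alpha> < 1" and "\<rho> > 0"
  shows "(\<forall>z0. \<exists>x. rc_solution \<beta> \<alpha> \<rho> x \<and> x 0 = z0)
       \<and> (\<forall>\<epsilon>>0. \<exists>\<delta>>0. \<forall>x. rc_solution \<beta> \<alpha> \<rho> x \<and> norm (x 0) < \<delta>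
              \<longrightarrow> (\<forall>t\<ge>0. norm (x t) < \<epsilon>))
       \<and> (\<forall>x. rc_solution \<beta> \<alpha> \<rho> x \<longrightarrow> (x \<longlongrightarrow> (0, 0)) at_top)"
  using rc_exists[OF assms(1,2,4)] rc_stable[OF assms(1,2,4)] rc_conv[OF assms(1,2,4)] by blast

end
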